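(* Let $\mathcal{G}=(\mathcal{V},\mathcal{E},\mathcal{W})$ be a connected, simple, undirected graph with vertex set $\mathcal{V}=\{1,\dots,n\}$, edge set $\mathcal{E}=\{e_1,\dots,e_m\}$ and positive edge weights $w_1,\dots,w_m$, each edge being given an arbitrary but fixed orientation. Let $D$ be its $n\times m$ incidence matrix, $W=\mathrm{diag}(w_1,\dots,w_m)$, $Q=DW^{-1}$, and for two distinct vertices $s,t$ let $y=y^{(s,t)}\in\mathbb{R}^n$ be the vector with $y(s)=+1$, $y(t)=-1$ and all other entries $0$. Assume (Assumption A1) that for every vertex $v$, the shortest (minimum total weight) path between $s$ and $v$ is unique and the shortest path between $t$ and $v$ is unique. Then for every $\lambda>0$ the lasso problem $$\min_{\beta\in\mathbb{R}^m}\ \tfrac12\|y-Q\beta\|_2^2+\lambda\|\beta\|_1$$ has a unique solution.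
   Context: The incidence matrix $D$ has entries $[D]_{ij}=+1$ if vertex $i$ is the tail of edge $e_j$, $-1$ if vertex $i$ is the head of edge $e_j$, and $0$ otherwise. The length of a path is the sum of the weights of its edges. *)

theory Defs
  imports "HOL-Analysis.Analysis"
begin

definition simple_graph :: "('e \<Rightarrow> 'v) \<Rightarrow> ('e \<Rightarrow> 'v) \<Rightarrow> bool" where
  "simple_graph tail head \<longleftrightarrow>
     (\<forall>e. tail e \<noteq> head e) \<and>
     (\<forall>e e'. {tail e, head e} = {tail e', head e'} \<longrightarrow> e = e')"

definition adjacent :: "('e \<Rightarrow> 'v) \<Rightarrow> ('e \<Rightarrow> 'v) \<Rightarrow> 'v \<Rightarrow> 'v \<Rightarrow> bool" where
  "adjacent tail head u v \<longleftrightarrow> (\<exists>e. {tail e, head e} = {u, v})"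

definition is_path :: "('e \<Rightarrow> 'v) \<Rightarrow> ('e \<Rightarrow> 'v) \<Rightarrow> 'v \<Rightarrow> 'v \<Rightarrow> 'v list \<Rightarrow> bool" where
  "is_path tail head u v p \<longleftrightarrow>
     p \<noteq> [] \<and> hd p = u \<and> last p = v \<and> distinct p \<and>
     (\<forall>i < length p - 1. adjacent tail head (p ! i) (p ! (i + 1)))"

text \<open>The edge joining two adjacent vertices (unique in a simple graph).\<close>
definition edge_between :: "('e \<Rightarrow> 'v) \<Rightarrow> ('e \<Rightarrow> 'v) \<Rightarrow> 'v \<Rightarrow> 'v \<Rightarrow> 'e" where
  "edge_between tail head u v = (THE e. {tail e, head e} = {u, v})"

definition path_length :: "('e \<Rightarrow> 'v) \<Rightarrow> ('e \<Rightarrow> 'v) \<Rightarrow> ('e \<Rightarrow> real) \<Rightarrow> 'v list \<Rightarrow> real" where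
  "path_length tail head w p =
     (\<Sum>i < length p - 1. w (edge_between tail head (p ! i) (p ! (i + 1))))"

definition connected_graph :: "('e \<Rightarrow> 'v) \<Rightarrow> ('e \<Rightarrow> 'v) \<Rightarrow> bool" where
  "connected_graph tail head \<longleftrightarrow> (\<forall>u v. \<exists>p. is_path tail head u v p)"

definition unique_shortest_path :: "('e \<Rightarrow> 'v) \<Rightarrow> ('e \<Rightarrow> 'v) \<Rightarrow> ('e \<Rightarrow> real) \<Rightarrow> 'v \<Rightarrow> 'v \<Rightarrow> bool" where
  "unique_shortest_path tail head w u v \<longleftrightarrow>
     (\<exists>!p. is_path tail head u v p \<and>
           (\<forall>q. is_path tail head u v q \<longrightarrow> path_length tail head w p \<le> path_length tail head w q))"

definition incidence :: "('e::finite \<Rightarrow> 'v::finite) \<Rightarrow> ('e \<Rightarrow> 'v) \<Rightarrow> real^'e^'v" where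
  "incidence tail head = (\<chi> i j. if i = tail j then 1 else if i = head j then -1 else 0)"

definition weight_matrix :: "('e::finite \<Rightarrow> real) \<Rightarrow> real^'e^'e" where
  "weight_matrix w = (\<chi> i j. if i = j then w j else 0)"

definition st_vector :: "'v::finite \<Rightarrow> 'v \<Rightarrow> real^'v" where
  "st_vector s t = (\<chi> i. if i = s then 1 else if i = t then -1 else 0)"

definition lasso_obj :: "real^'v::finite \<Rightarrow> real^'e::finite^'v \<Rightarrow> real \<Rightarrow> real^'e \<Rightarrow> real" where
  "lasso_obj y Q lam \<beta> = 1/2 * (norm (y - Q *v \<beta>))\<^sup>2 + lam * (\<Sum>j\<in>UNIV. \<bar>\<beta> $ j\<bar>)"

end

theory Submission
  imports Defs
begin


definition Dm :: "('e \<Rightarrow> 'v) \<Rightarrow> ('e \<Rightarrow> 'v) \<Rightarrow> 'v \<Rightarrow> 'e \<Rightarrow> real" where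
  "Dm tail head a e = (if a = tail e then 1 else if a = head e then -1 else 0)"

context
  fixes tail head :: "'e::finite \<Rightarrow> 'v::finite" and w :: "'e \<Rightarrow> real"
  assumes simple: "simple_graph tail head" and wpos: "\<forall>e. w e > 0"
begin

lemma eb_eq: "{tail e, head e} = {a, b} \<Longrightarrow> edge_between tail head a b = e"
  unfolding edge_between_def
  by (rule the_equality) (use simple in \<open>auto simp: simple_graph_def\<close>)

lemma eb_sym: "edge_between tail head a b = edge_between tail head b a"
  unfolding edge_between_def by (simp add: insert_commute)

lemma adj_lip:
  assumes lip: "\<forall>e. \<bar>\<phi> (tail e) - \<phi> (head e)\<bar> \<le> w e" and "adjacent tail head a b"
  shows "\<phi> a - \<phi> b \<le> w (edge_between tail head a b)"
proof -
  obtain e where e: "{tail e, head e} = {a, b}" using assms(2) unfolding adjacent_def by auto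
  then have "edge_between tail head a b = e" by (rule eb_eq)
  moreover have "\<phi> a - \<phi> b \<le> w e" using lip[rule_format, of e] e
    by (auto simp: doubleton_eq_iff)
  ultimately show ?thesis by simp
qed

lemma walk_lip:
  assumes lip: "\<forall>e. \<bar>\<phi> (tail e) - \<phi> (head e)\<bar> \<le> w e"
    and ne: "q \<noteq> []" and adj: "\<forall>i < length q - 1. adjacent tail head (q ! i) (q ! (i + 1))"
  shows "\<phi> (hd q) - \<phi> (last q) \<le> path_length tail head w q"
proof -
  have "\<phi> (hd q) - \<phi> (last q) = (\<Sum>i<length q - 1. \<phi> (q ! i) - \<phi> (q ! Suc i))"
    using sum_lessThan_telescope'[of "\<lambda>i. \<phi> (q ! i)" "length q - 1"] ne
    by (simp add: hd_conv_nth last_conv_nth)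
  also have "\<dots> \<le> path_length tail head w q"
    unfolding path_length_def
    by (rule sum_mono) (use adj_lip[OF lip] adj in auto)
  finally show ?thesis .
qed

lemma path_length_take:
  "path_length tail head w (take k q) \<le> path_length tail head w q"
  unfolding path_length_def
proof -
  have "(\<Sum>i<length (take k q) - 1. w (edge_between tail head (take k q ! i) (take k q ! (i + 1))))
      = (\<Sum>i<length (take k q) - 1. w (edge_between tail head (q ! i) (q ! (i + 1))))"
    by (rule sum.cong) auto
  also have "\<dots> \<le> (\<Sum>i<length q - 1. w (edge_between tail head (q ! i) (q ! (i + 1))))"
    by (rule sum_mono2) (use wpos in \<open>auto intro: less_imp_le\<close>)
  finally show "(\<Sum>i<length (take k q) - 1. w (edge_between tail head (take k q ! i) (take k q ! (i + 1))))
      \<le> (\<Sum>i<length q - 1. w (edge_between tail head (q ! i) (q ! (i + 1))))" .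
qed

lemma path_length_snoc:
  assumes "q \<noteq> []"
  shows "path_length tail head w (q @ [b]) = path_length tail head w q + w (edge_between tail head (last q) b)"
proof -
  obtain n where n: "length q = Suc n" using assms by (cases q) auto
  show ?thesis unfolding path_length_def using n
    by (simp add: nth_append last_conv_nth[OF assms])
qed

lemma tight_shortest:
  assumes lip: "\<forall>e. \<bar>\<phi> (tail e) - \<phi> (head e)\<bar> \<le> w e"
    and "is_path tail head x b q" and "\<phi> x - \<phi> b = path_length tail head w q"
  shows "\<forall>q'. is_path tail head x b q' \<longrightarrow> path_length tail head w q \<le> path_length tail head w q'"
  using walk_lip[OF lip] assms(2,3) unfolding is_path_def by fastforce

lemma tight_unique:
  assumes lip: "\<forall>e. \<bar>\<phi> (tail e) - \<phi> (head e)\<bar> \<le> w e"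
    and u: "unique_shortest_path tail head w x b"
    and "is_path tail head x b q1" and "\<phi> x - \<phi> b = path_length tail head w q1"
    and "is_path tail head x b q2" and "\<phi> x - \<phi> b = path_length tail head w q2"
  shows "q1 = q2"
  using u tight_shortest[OF lip assms(3,4)] tight_shortest[OF lip assms(5,6)] assms(3,5)
  unfolding unique_shortest_path_def by blast

lemma tight_prop:
  assumes lip: "\<forall>e. \<bar>\<phi> (tail e) - \<phi> (head e)\<bar> \<le> w e"
    and path: "is_path tail head x a q" and eq: "\<phi> x - \<phi> a = path_length tail head w q"
    and e: "{tail e, head e} = {a, b}" and tight: "\<phi> a - \<phi> b = w e"
  shows "is_path tail head x b (q @ [b]) \<and> \<phi> x - \<phi> b = path_length tail head w (q @ [b])"
proof -
  have ne: "q \<noteq> []" and hd: "hd q = x" and lst: "last q = a" and dist: "distinct q"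
    and adj: "\<forall>i < length q - 1. adjacent tail head (q ! i) (q ! (i + 1))"
    using path unfolding is_path_def by auto
  have we: "w e > 0" using wpos by auto
  have bnot: "b \<notin> set q"
  proof
    assume "b \<in> set q"
    then obtain k where k: "k < length q" "q ! k = b" by (auto simp: in_set_conv_nth)
    let ?q = "take (Suc k) q"
    have "\<phi> (hd ?q) - \<phi> (last ?q) \<le> path_length tail head w ?q"
      by (rule walk_lip[OF lip]) (use ne k adj in \<open>auto simp: min_def\<close>)
    moreover have "hd ?q = x" using ne hd by (simp add: hd_conv_nth)
    moreover have "last ?q = b" using k by (subst last_conv_nth) (auto simp: min_def le_Suc_eq)
    ultimately have "\<phi> x - \<phi> b \<le> path_length tail head w q"
      using path_length_take[of "Suc k" q] by simp
    then show False using eq tight we by simp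
  qed
  have eb: "edge_between tail head a b = e" using e by (intro eb_eq) simp
  have adjab: "adjacent tail head a b" using e unfolding adjacent_def by auto
  have "is_path tail head x b (q @ [b])"
    unfolding is_path_def
  proof (intro conjI allI impI)
    show "hd (q @ [b]) = x" using ne hd by simp
    show "distinct (q @ [b])" using dist bnot by simp
    fix i assume i: "i < length (q @ [b]) - 1"
    show "adjacent tail head ((q @ [b]) ! i) ((q @ [b]) ! (i + 1))"
    proof (cases "i < length q - 1")
      case True then show ?thesis using adj by (auto simp: nth_append)
    next
      case False
      then have "i = length q - 1" using i by simp
      then show ?thesis using adjab ne lst by (simp add: nth_append last_conv_nth)
    qed
  qed auto
  moreover have "\<phi> x - \<phi> b = path_length tail head w (q @ [b])"
    using path_length_snoc[OF ne, of b] lst eb eq tight by simp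
  ultimately show ?thesis by simp
qed


lemma claimA:
  assumes lip: "\<forall>e. \<bar>p (tail e) - p (head e)\<bar> \<le> w e"
    and tight: "\<forall>e. \<gamma> e \<noteq> 0 \<longrightarrow> p (tail e) - p (head e) = w e * sgn (\<gamma> e)"
    and cons: "\<forall>a. a \<noteq> s \<longrightarrow> p a \<ge> 0 \<longrightarrow> (\<Sum>e\<in>UNIV. Dm tail head a e * \<gamma> e) \<le> 0"
  shows "(\<exists>e. Dm tail head a e * \<gamma> e > 0) \<longrightarrow> p a \<ge> 0 \<longrightarrow>
           (\<exists>q. is_path tail head s a q \<and> p s - p a = path_length tail head w q)"
proof (induction "card {v. p v > p a}" arbitrary: a rule: less_induct)
  case less
  show ?case
  proof (intro impI)
    assume pos: "\<exists>e. Dm tail head a e * \<gamma> e > 0" and pa: "p a \<ge> 0"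
    show "\<exists>q. is_path tail head s a q \<and> p s - p a = path_length tail head w q"
    proof (cases "a = s")
      case True
      then show ?thesis
        by (intro exI[of _ "[s]"]) (simp add: is_path_def path_length_def)
    next
      case False
      obtain e0 where e0: "Dm tail head a e0 * \<gamma> e0 > 0" using pos by auto
      have "\<exists>e'. Dm tail head a e' * \<gamma> e' < 0"
      proof (rule ccontr)
        assume "\<not> ?thesis"
        then have "\<forall>e. Dm tail head a e * \<gamma> e \<ge> 0" by (auto simp: not_less)
        then have "Dm tail head a e0 * \<gamma> e0 \<le> (\<Sum>e\<in>UNIV. Dm tail head a e * \<gamma> e)"
          by (intro member_le_sum) auto
        then show False using cons False pa e0 by force
      qed
      then obtain e' where e': "Dm tail head a e' * \<gamma> e' < 0" by auto
      have tl: "tail e' \<noteq> head e'" using simple unfolding simple_graph_def by auto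
      have we: "w e' > 0" using wpos by auto
      obtain c where c: "{tail e', head e'} = {c, a}" "p c - p a = w e'" "Dm tail head c e' * \<gamma> e' > 0"
      proof (cases "a = tail e'")
        case True
        then have g: "\<gamma> e' < 0" using e' by (simp add: Dm_def mult_less_0_iff)
        then have "p (tail e') - p (head e') = - w e'" using tight by (auto simp: sgn_if)
        then show ?thesis using that[of "head e'"] True tl g by (auto simp: Dm_def)
      next
        case False
        then have ah: "a = head e'" using e' by (auto simp: Dm_def split: if_splits)
        then have g: "\<gamma> e' > 0" using e' False by (simp add: Dm_def mult_less_0_iff)
        then have "p (tail e') - p (head e') = w e'" using tight by (auto simp: sgn_if)
        then show ?thesis using that[of "tail e'"] ah tl g by (auto simp: Dm_def)
      qed
      have "card {v. p v > p c} < card {v. p v > p a}"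
        by (rule psubset_card_mono) (use c we in auto)
      then have "(\<exists>e. Dm tail head c e * \<gamma> e > 0) \<longrightarrow> p c \<ge> 0 \<longrightarrow>
           (\<exists>q. is_path tail head s c q \<and> p s - p c = path_length tail head w q)"
        by (rule less)
      then obtain q where q: "is_path tail head s c q" "p s - p c = path_length tail head w q"
        using c we pa by force
      show ?thesis using tight_prop[OF lip q c(1) c(2)] by blast
    qed
  qed
qed

lemma deg_count:
  fixes S :: "'e set" and hi lo :: "'e \<Rightarrow> 'v"
  assumes ne: "\<forall>e\<in>S. hi e \<noteq> lo e"
    and deg: "\<forall>e\<in>S. \<forall>v\<in>{hi e, lo e}. \<exists>e'\<in>S. e' \<noteq> e \<and> v \<in> {hi e', lo e'}"
  shows "card (\<Union>e\<in>S. {hi e, lo e}) \<le> card S"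
proof -
  let ?V = "\<Union>e\<in>S. {hi e, lo e}"
  let ?I = "SIGMA e:S. {hi e, lo e}"
  let ?J = "SIGMA v:?V. {e\<in>S. v \<in> {hi e, lo e}}"
  have "card ?I = (\<Sum>e\<in>S. card {hi e, lo e})" by (rule card_SigmaI) auto
  also have "\<dots> = (\<Sum>e\<in>S. 2)" by (rule sum.cong) (use ne in auto)
  finally have cI: "card ?I = 2 * card S" by simp
  have "?J = (\<lambda>(e,v). (v,e)) ` ?I" by auto
  moreover have "inj_on (\<lambda>(e,v). (v,e)) ?I" by (auto simp: inj_on_def)
  ultimately have cJ: "card ?J = card ?I" by (simp add: card_image)
  have "card ?J = (\<Sum>v\<in>?V. card {e\<in>S. v \<in> {hi e, lo e}})" by (rule card_SigmaI) auto
  also have "\<dots> \<ge> (\<Sum>v\<in>?V. 2)"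
  proof (rule sum_mono)
    fix v assume "v \<in> ?V"
    then obtain e0 where e0: "e0 \<in> S" "v \<in> {hi e0, lo e0}" by auto
    then obtain e' where e': "e' \<in> S" "e' \<noteq> e0" "v \<in> {hi e', lo e'}" using deg by blast
    have "card {e0, e'} \<le> card {e\<in>S. v \<in> {hi e, lo e}}"
      by (rule card_mono) (use e0 e' in auto)
    then show "2 \<le> card {e\<in>S. v \<in> {hi e, lo e}}" using e' by simp
  qed
  finally show ?thesis using cI cJ by simp
qed

lemma comb:
  fixes S :: "'e set" and hi lo :: "'e \<Rightarrow> 'v" and p :: "'v \<Rightarrow> real" and A B :: "'v \<Rightarrow> bool"
  assumes ends: "\<forall>e\<in>S. {tail e, head e} = {hi e, lo e}"
    and gap: "\<forall>e\<in>S. p (hi e) > p (lo e)"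
    and deg: "\<forall>e\<in>S. \<forall>v\<in>{hi e, lo e}. \<exists>e'\<in>S. e' \<noteq> e \<and> v \<in> {hi e', lo e'}"
    and a: "\<forall>e\<in>S. A (hi e) \<or> B (lo e)"
    and b: "\<forall>e\<in>S. A (hi e) \<longrightarrow> A (lo e)"
    and c: "\<forall>e\<in>S. \<forall>e'\<in>S. A (hi e) \<longrightarrow> A (hi e') \<longrightarrow> lo e = lo e' \<longrightarrow> hi e = hi e'"
    and d: "\<forall>e\<in>S. \<forall>e'\<in>S. B (lo e) \<longrightarrow> B (lo e') \<longrightarrow> hi e = hi e' \<longrightarrow> lo e = lo e'"
  shows "S = {}"
proof (rule ccontr)
  assume Sne: "S \<noteq> {}"
  let ?V = "\<Union>e\<in>S. {hi e, lo e}"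
  define g where "g e = (if A (hi e) then lo e else hi e)" for e
  have same: "e = e'" if "e \<in> S" "e' \<in> S" "hi e = hi e'" "lo e = lo e'" for e e'
  proof -
    have "{tail e, head e} = {tail e', head e'}" using ends that by auto
    then show ?thesis using simple unfolding simple_graph_def by blast
  qed
  have inj: "inj_on g S"
  proof (rule inj_onI)
    fix e e' assume e: "e \<in> S" and e': "e' \<in> S" and eq: "g e = g e'"
    show "e = e'"
    proof (cases "A (hi e)"; cases "A (hi e')")
      assume "A (hi e)" "A (hi e')"
      then show ?thesis using eq c e e' same by (auto simp: g_def)
    next
      assume "\<not> A (hi e)" "\<not> A (hi e')"
      moreover have "B (lo e)" "B (lo e')" using a e e' \<open>\<not> A (hi e)\<close> \<open>\<not> A (hi e')\<close> by auto
      ultimately show ?thesis using eq d e e' same by (auto simp: g_def)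
    next
      assume "A (hi e)" "\<not> A (hi e')"
      then show ?thesis using eq b e e' by (auto simp: g_def)
    next
      assume "\<not> A (hi e)" "A (hi e')"
      then show ?thesis using eq b e e' by (auto simp: g_def)
    qed
  qed
  have sub: "g ` S \<subseteq> ?V" by (auto simp: g_def)
  have "card S \<le> card ?V" using card_inj_on_le[OF inj sub] by simp
  moreover have "card ?V \<le> card S"
    by (rule deg_count) (use gap deg in force)+
  ultimately have "card (g ` S) = card ?V" using card_image[OF inj] by simp
  then have img: "g ` S = ?V" using sub by (intro card_subset_eq) auto
  have "finite ?V" "?V \<noteq> {}" using Sne by auto
  then have "Max (p ` ?V) \<in> p ` ?V" by (intro Max_in) auto
  then obtain m where m1: "p m = Max (p ` ?V)" "m \<in> ?V" by (rule imageE) simp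
  have m: "m \<in> ?V" "\<forall>v\<in>?V. p v \<le> p m"
    using m1 \<open>finite ?V\<close> by auto
  obtain e where e: "e \<in> S" "m = g e" using img m(1) by (metis (no_types, lifting) imageE)
  show False
  proof (cases "A (hi e)")
    case True
    then have "m = lo e" using e by (simp add: g_def)
    moreover have "hi e \<in> ?V" using e by auto
    ultimately show False using m(2) gap e(1) by fastforce
  next
    case False
    then have mh: "m = hi e" using e by (simp add: g_def)
    obtain e'' where e'': "e'' \<in> S" "e'' \<noteq> e" "m \<in> {hi e'', lo e''}" using deg e mh by blast
    have "m \<noteq> lo e''"
    proof
      assume "m = lo e''"
      moreover have "hi e'' \<in> ?V" using e'' by auto
      ultimately show False using m(2) gap e''(1) by fastforce
    qed
    then have "m = hi e''" using e'' by auto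
    then have "g e'' = g e" using False mh by (simp add: g_def)
    then show False using inj_onD[OF inj _ e''(1) e(1)] e''(2) by blast
  qed
qed

end


lemma small_pos:
  fixes A K \<epsilon> :: real
  assumes K: "K \<ge> 0" and eps: "\<epsilon> > 0" and H: "\<forall>s. 0 < s \<longrightarrow> s < \<epsilon> \<longrightarrow> 0 \<le> s * A + s^2 * K"
  shows "0 \<le> A"
proof (rule ccontr)
  assume "\<not> 0 \<le> A"
  then have A: "A < 0" by simp
  define s where "s = min (\<epsilon>/2) (-A/(K+1))"
  have "-A/(K+1) > 0" using A K by (intro divide_pos_pos) auto
  then have s0: "s > 0" using eps by (simp add: s_def)
  have s1: "s < \<epsilon>" using eps by (simp add: s_def)
  have "s \<le> -A/(K+1)" by (simp add: s_def)
  then have "s * (K+1) \<le> -A" using K by (simp add: field_simps)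
  then have "s * K < -A" using s0 by (simp add: algebra_simps)
  then have "A + s * K < 0" by simp
  then have "s * (A + s * K) < 0" using s0 by (simp add: mult_pos_neg)
  moreover have "s * (A + s * K) = s * A + s^2 * K" by (simp add: algebra_simps power2_eq_square)
  ultimately show False using H s0 s1 by auto
qed

lemma norm_sq_expand:
  fixes a b :: "'a::real_inner"
  shows "(norm (a - t *\<^sub>R b))^2 = (norm a)^2 - 2 * t * (a \<bullet> b) + t^2 * (norm b)^2"
  unfolding power2_norm_eq_inner
  by (simp add: inner_diff_left inner_diff_right inner_commute algebra_simps power2_eq_square)

lemma obj_step:
  fixes Q :: "real^'e::finite^'v::finite"
  shows "lasso_obj y Q lam (\<beta> + t *\<^sub>R axis j 1) = lasso_obj y Q lam \<beta>
     - t * ((y - Q *v \<beta>) \<bullet> column j Q) + t^2/2 * (norm (column j Q))^2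
     + lam * (\<bar>\<beta> $ j + t\<bar> - \<bar>\<beta> $ j\<bar>)"
proof -
  let ?r = "y - Q *v \<beta>" and ?v = "column j Q"
  have eq1: "y - Q *v (\<beta> + t *\<^sub>R axis j 1) = ?r - t *\<^sub>R ?v"
    by (simp add: matrix_vector_right_distrib matrix_vector_mult_scaleR matrix_vector_mult_basis)
  have eq2: "(norm (?r - t *\<^sub>R ?v))^2 = (norm ?r)^2 - 2 * t * (?r \<bullet> ?v) + t^2 * (norm ?v)^2"
    by (rule norm_sq_expand)
  have "(\<Sum>i\<in>UNIV. \<bar>(\<beta> + t *\<^sub>R axis j 1) $ i\<bar>)
      = (\<Sum>i\<in>UNIV. \<bar>\<beta> $ i\<bar> + (if i = j then \<bar>\<beta> $ j + t\<bar> - \<bar>\<beta> $ j\<bar> else 0))"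
    by (rule sum.cong) (auto simp: axis_def)
  also have "\<dots> = (\<Sum>i\<in>UNIV. \<bar>\<beta> $ i\<bar>) + (\<bar>\<beta> $ j + t\<bar> - \<bar>\<beta> $ j\<bar>)"
    by (simp add: sum.distrib)
  finally have eq3: "(\<Sum>i\<in>UNIV. \<bar>(\<beta> + t *\<^sub>R axis j 1) $ i\<bar>) = (\<Sum>i\<in>UNIV. \<bar>\<beta> $ i\<bar>) + (\<bar>\<beta> $ j + t\<bar> - \<bar>\<beta> $ j\<bar>)" .
  show ?thesis unfolding lasso_obj_def eq1 eq2 eq3 by (simp add: algebra_simps)
qed

lemma kkt:
  fixes Q :: "real^'e::finite^'v::finite"
  assumes opt: "\<forall>\<beta>'. lasso_obj y Q lam \<beta> \<le> lasso_obj y Q lam \<beta>'" and lam: "lam > 0"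
    and c_def: "c = (y - Q *v \<beta>) \<bullet> column j Q"
  shows "\<bar>c\<bar> \<le> lam \<and> (\<beta> $ j > 0 \<longrightarrow> c = lam) \<and> (\<beta> $ j < 0 \<longrightarrow> c = -lam)"
proof -
  define K where "K = (norm (column j Q))^2/2"
  define b where "b = \<beta> $ j"
  have K: "K \<ge> 0" by (simp add: K_def)
  have H: "0 \<le> - t * c + t^2 * K + lam * (\<bar>b + t\<bar> - \<bar>b\<bar>)" for t
    using opt[rule_format, of "\<beta> + t *\<^sub>R axis j 1"] obj_step[of y Q lam \<beta> t j]
    unfolding c_def K_def b_def by simp
  have c1: "c \<le> lam" if "b \<ge> 0"
  proof -
    have "0 \<le> lam - c"
    proof (rule small_pos[OF K, of 1])
      show "\<forall>s. 0 < s \<longrightarrow> s < 1 \<longrightarrow> 0 \<le> s * (lam - c) + s\<^sup>2 * K"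
      proof (intro allI impI)
        fix s :: real assume "0 < s" "s < 1"
        then show "0 \<le> s * (lam - c) + s\<^sup>2 * K" using H[of s] that by (simp add: algebra_simps)
      qed
    qed simp
    then show ?thesis by simp
  qed
  have c2: "c \<le> -lam" if "b < 0"
  proof -
    have "0 \<le> -lam - c"
    proof (rule small_pos[OF K, of "-b"])
      show "\<forall>s. 0 < s \<longrightarrow> s < -b \<longrightarrow> 0 \<le> s * (-lam - c) + s\<^sup>2 * K"
      proof (intro allI impI)
        fix s :: real assume "0 < s" "s < -b"
        then show "0 \<le> s * (-lam - c) + s\<^sup>2 * K" using H[of s] that by (simp add: algebra_simps)
      qed
    qed (use that in simp)
    then show ?thesis by simp
  qed
  have c3: "c \<ge> -lam" if "b \<le> 0"
  proof -
    have "0 \<le> lam + c"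
    proof (rule small_pos[OF K, of 1])
      show "\<forall>s. 0 < s \<longrightarrow> s < 1 \<longrightarrow> 0 \<le> s * (lam + c) + s\<^sup>2 * K"
      proof (intro allI impI)
        fix s :: real assume "0 < s" "s < 1"
        then show "0 \<le> s * (lam + c) + s\<^sup>2 * K" using H[of "-s"] that by (simp add: algebra_simps)
      qed
    qed simp
    then show ?thesis by simp
  qed
  have c4: "c \<ge> lam" if "b > 0"
  proof -
    have "0 \<le> c - lam"
    proof (rule small_pos[OF K, of "b"])
      show "\<forall>s. 0 < s \<longrightarrow> s < b \<longrightarrow> 0 \<le> s * (c - lam) + s\<^sup>2 * K"
      proof (intro allI impI)
        fix s :: real assume "0 < s" "s < b"
        then show "0 \<le> s * (c - lam) + s\<^sup>2 * K" using H[of "-s"] that by (simp add: algebra_simps)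
      qed
    qed (use that in simp)
    then show ?thesis by simp
  qed
  show ?thesis using c1 c2 c3 c4 lam unfolding b_def[symmetric]
    by (cases "b > 0"; cases "b < 0") auto
qed

lemma obj_cont:
  fixes Q :: "real^'e::finite^'v::finite"
  shows "continuous_on S (lasso_obj y Q lam)"
proof -
  have "continuous_on S (\<lambda>\<beta>. Q *v \<beta>)"
    by (intro linear_continuous_on) (simp add: linear_conv_bounded_linear[symmetric])
  then show ?thesis unfolding lasso_obj_def
    by (intro continuous_intros) auto
qed

lemma obj_exists:
  fixes Q :: "real^'e::finite^'v::finite"
  assumes lam: "lam > 0"
  shows "\<exists>\<beta>. \<forall>\<beta>'. lasso_obj y Q lam \<beta> \<le> lasso_obj y Q lam \<beta>'"
proof -
  let ?f = "lasso_obj y Q lam"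
  define R where "R = ?f 0 / lam"
  have R: "R \<ge> 0" unfolding R_def lasso_obj_def using lam by simp
  obtain x where x: "x \<in> cball 0 R" "\<forall>z\<in>cball 0 R. ?f x \<le> ?f z"
    using continuous_attains_inf[OF compact_cball _ obj_cont, of 0 R y Q lam] R by auto
  have "?f x \<le> ?f z" for z
  proof (cases "z \<in> cball 0 R")
    case True then show ?thesis using x by auto
  next
    case False
    then have nz: "norm z > R" by (simp add: dist_norm)
    have "lam * norm z \<le> lam * (\<Sum>j\<in>UNIV. \<bar>z $ j\<bar>)"
      using lam norm_le_l1_cart[of z] by simp
    also have "\<dots> \<le> ?f z" unfolding lasso_obj_def by simp
    finally have "lam * norm z \<le> ?f z" .
    moreover have "lam * R < lam * norm z" using nz lam by simp
    moreover have "lam * R = ?f 0" unfolding R_def using lam by simp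
    moreover have "?f x \<le> ?f 0" using x R by simp
    ultimately show ?thesis by linarith
  qed
  then show ?thesis by blast
qed

lemma mid_norm:
  fixes a b :: "'a::real_inner"
  shows "(norm ((1/2) *\<^sub>R (a + b)))^2 = ((norm a)^2 + (norm b)^2)/2 - (norm (a - b))^2/4"
  unfolding power2_norm_eq_inner
  by (simp add: inner_add_left inner_add_right inner_diff_left inner_diff_right inner_commute algebra_simps) (simp add: field_simps)

lemma two_min:
  fixes Q :: "real^'e::finite^'v::finite"
  assumes lam: "lam > 0"
    and o1: "\<forall>\<beta>'. lasso_obj y Q lam \<beta>1 \<le> lasso_obj y Q lam \<beta>'"
    and o2: "\<forall>\<beta>'. lasso_obj y Q lam \<beta>2 \<le> lasso_obj y Q lam \<beta>'"
  shows "Q *v \<beta>1 = Q *v \<beta>2 \<and> (\<forall>j. \<beta>1 $ j * \<beta>2 $ j \<ge> 0)"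
proof -
  let ?f = "lasso_obj y Q lam"
  define a1 where "a1 = y - Q *v \<beta>1"
  define a2 where "a2 = y - Q *v \<beta>2"
  define bm where "bm = (1/2) *\<^sub>R (\<beta>1 + \<beta>2)"
  have "y - Q *v bm = (1/2) *\<^sub>R (a1 + a2)"
    unfolding bm_def a1_def a2_def
    by (simp add: vec_eq_iff matrix_vector_right_distrib matrix_vector_mult_scaleR algebra_simps)
  then have n: "(norm (y - Q *v bm))^2 = ((norm a1)^2 + (norm a2)^2)/2 - (norm (a1 - a2))^2/4"
    using mid_norm[of a1 a2] by metis
  have l: "(\<Sum>j\<in>UNIV. \<bar>bm $ j\<bar>) = (\<Sum>j\<in>UNIV. \<bar>\<beta>1 $ j + \<beta>2 $ j\<bar>)/2"
    unfolding bm_def by (simp add: sum_divide_distrib)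
  define D where "D = (\<Sum>j\<in>UNIV. \<bar>\<beta>1 $ j\<bar> + \<bar>\<beta>2 $ j\<bar> - \<bar>\<beta>1 $ j + \<beta>2 $ j\<bar>)"
  have Dnn: "\<forall>j\<in>UNIV. 0 \<le> \<bar>\<beta>1 $ j\<bar> + \<bar>\<beta>2 $ j\<bar> - \<bar>\<beta>1 $ j + \<beta>2 $ j\<bar>" by auto
  have D0: "D \<ge> 0" unfolding D_def by (rule sum_nonneg) auto
  have Deq: "D = (\<Sum>j\<in>UNIV. \<bar>\<beta>1 $ j\<bar>) + (\<Sum>j\<in>UNIV. \<bar>\<beta>2 $ j\<bar>) - (\<Sum>j\<in>UNIV. \<bar>\<beta>1 $ j + \<beta>2 $ j\<bar>)"
    unfolding D_def by (simp add: sum.distrib sum_subtractf)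
  have f12: "?f \<beta>1 = ?f \<beta>2" using o1 o2 by (meson order_antisym)
  have "?f \<beta>1 \<le> ?f bm" using o1 by simp
  then have i1: "1/2 * (norm a1)^2 + lam * (\<Sum>j\<in>UNIV. \<bar>\<beta>1 $ j\<bar>) \<le>
      1/2 * (((norm a1)^2 + (norm a2)^2)/2 - (norm (a1 - a2))^2/4) + lam * ((\<Sum>j\<in>UNIV. \<bar>\<beta>1 $ j + \<beta>2 $ j\<bar>)/2)"
    using n l unfolding lasso_obj_def a1_def[symmetric] by simp
  have i2: "1/2 * (norm a1)^2 + lam * (\<Sum>j\<in>UNIV. \<bar>\<beta>1 $ j\<bar>) = 1/2 * (norm a2)^2 + lam * (\<Sum>j\<in>UNIV. \<bar>\<beta>2 $ j\<bar>)"
    using f12 unfolding lasso_obj_def a1_def[symmetric] a2_def[symmetric] by simp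
  have i3: "lam * D = lam * (\<Sum>j\<in>UNIV. \<bar>\<beta>1 $ j\<bar>) + lam * (\<Sum>j\<in>UNIV. \<bar>\<beta>2 $ j\<bar>) - lam * (\<Sum>j\<in>UNIV. \<bar>\<beta>1 $ j + \<beta>2 $ j\<bar>)"
    unfolding Deq by (simp add: algebra_simps)
  have key: "(norm (a1 - a2))^2/8 + lam * D/2 \<le> 0"
    using i1 i2 i3 by (simp add: field_simps)
  have "(norm (a1 - a2))^2 \<ge> 0" by simp
  moreover have "lam * D \<ge> 0" using lam D0 by simp
  ultimately have "(norm (a1 - a2))^2 = 0" "lam * D = 0" using key by linarith+
  then have "a1 = a2" "D = 0" using lam by auto
  then have "Q *v \<beta>1 = Q *v \<beta>2" unfolding a1_def a2_def by simp
  moreover have "\<forall>j. \<beta>1 $ j * \<beta>2 $ j \<ge> 0"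
  proof
    fix j
    have "\<bar>\<beta>1 $ j\<bar> + \<bar>\<beta>2 $ j\<bar> - \<bar>\<beta>1 $ j + \<beta>2 $ j\<bar> = 0"
      using \<open>D = 0\<close> sum_nonneg_eq_0_iff[of UNIV "\<lambda>j. \<bar>\<beta>1 $ j\<bar> + \<bar>\<beta>2 $ j\<bar> - \<bar>\<beta>1 $ j + \<beta>2 $ j\<bar>"] Dnn unfolding D_def by auto
    then show "\<beta>1 $ j * \<beta>2 $ j \<ge> 0"
      by (cases "\<beta>1 $ j \<ge> 0"; cases "\<beta>2 $ j \<ge> 0") (auto simp: mult_nonneg_nonneg mult_nonpos_nonpos)
  qed
  ultimately show ?thesis by simp
qed



context
  fixes tail head :: "'e::finite \<Rightarrow> 'v::finite" and w :: "'e \<Rightarrow> real"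
  assumes simple: "simple_graph tail head" and wpos: "\<forall>e. w e > 0"
begin


lemma winv: "matrix_inv (weight_matrix w) = (\<chi> i j. if i = j then 1 / w j else 0)"
proof -
  let ?W = "weight_matrix w" and ?B = "(\<chi> i j. if i = j then 1 / w j else (0::real)) :: real^'e^'e"
  have WB: "?W ** ?B = mat 1"
    unfolding matrix_matrix_mult_def weight_matrix_def mat_def
    using wpos by (simp add: vec_eq_iff if_distrib[of "\<lambda>x. x * _"] cong: if_cong) (auto simp: sum.delta' less_imp_neq[symmetric])
  have BW: "?B ** ?W = mat 1"
    unfolding matrix_matrix_mult_def weight_matrix_def mat_def
    using wpos by (simp add: vec_eq_iff if_distrib[of "\<lambda>x. x * _"] cong: if_cong) (auto simp: sum.delta' less_imp_neq[symmetric])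
  let ?A = "matrix_inv ?W"
  have A: "?W ** ?A = mat 1 \<and> ?A ** ?W = mat 1"
    unfolding matrix_inv_def by (rule someI[of _ ?B]) (use WB BW in simp)
  have "?A = ?A ** (?W ** ?B)" using WB by simp
  also have "\<dots> = (?A ** ?W) ** ?B" by (simp add: matrix_mul_assoc)
  also have "\<dots> = ?B" using A by simp
  finally show ?thesis .
qed

lemma Qm_entry: "(incidence tail head ** matrix_inv (weight_matrix w)) $ v $ e = Dm tail head v e / w e"
  unfolding winv matrix_matrix_mult_def incidence_def Dm_def
  by (simp add: if_distrib[of "\<lambda>x. _ * x"] cong: if_cong)

lemma Qm_mult: "((incidence tail head ** matrix_inv (weight_matrix w)) *v \<beta>) $ v = (\<Sum>e\<in>UNIV. Dm tail head v e * (\<beta> $ e / w e))"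
  unfolding matrix_vector_mult_def by (simp add: Qm_entry)

lemma Qm_col: "r \<bullet> column e (incidence tail head ** matrix_inv (weight_matrix w)) = (r $ tail e - r $ head e) / w e"
proof -
  have th: "tail e \<noteq> head e" using simple unfolding simple_graph_def by auto
  have "r \<bullet> column e (incidence tail head ** matrix_inv (weight_matrix w))
     = (\<Sum>v\<in>UNIV. (if v = tail e then r $ v / w e else 0) - (if v = head e then r $ v / w e else 0))"
    unfolding inner_vec_def column_def
    by (rule sum.cong) (use th in \<open>auto simp: Qm_entry Dm_def\<close>)
  also have "\<dots> = (r $ tail e - r $ head e) / w e"
    by (simp add: sum_subtractf diff_divide_distrib)
  finally show ?thesis .
qed

end


theorem lemma3p2:
  fixes tail head :: "'e::finite \<Rightarrow> 'v::finite"
    and w :: "'e \<Rightarrow> real"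
    and s t :: 'v
    and lam :: real
  assumes simple: "simple_graph tail head"
    and conn: "connected_graph tail head"
    and wpos: "\<forall>e. w e > 0"
    and st: "s \<noteq> t"
    and A1: "\<forall>v. unique_shortest_path tail head w s v \<and> unique_shortest_path tail head w t v"
    and lam: "lam > 0"
  shows "\<exists>!\<beta>. \<forall>\<beta>'. lasso_obj (st_vector s t) (incidence tail head ** matrix_inv (weight_matrix w)) lam \<beta>
                 \<le> lasso_obj (st_vector s t) (incidence tail head ** matrix_inv (weight_matrix w)) lam \<beta>'"
proof -
  let ?Q = "incidence tail head ** matrix_inv (weight_matrix w)"
  let ?y = "st_vector s t"
  let ?f = "lasso_obj ?y ?Q lam"
  obtain \<beta>1 where o1: "\<forall>\<beta>'. ?f \<beta>1 \<le> ?f \<beta>'" using obj_exists[OF lam] by blast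
  have th: "\<And>e. tail e \<noteq> head e" using simple unfolding simple_graph_def by auto
  have wne: "\<And>e. w e \<noteq> 0" "\<And>e. w e > 0" using wpos by (auto simp: less_imp_neq[symmetric])
  have uniq: "\<beta>2 = \<beta>1" if o2: "\<forall>\<beta>'. ?f \<beta>2 \<le> ?f \<beta>'" for \<beta>2
  proof (rule ccontr)
    assume neq: "\<beta>2 \<noteq> \<beta>1"
    have Qeq: "?Q *v \<beta>1 = ?Q *v \<beta>2" using two_min[OF lam o1 o2] by simp
    define r where "r = ?y - ?Q *v \<beta>1"
    define p where "p v = r $ v / lam" for v
    define c where "c e = (r $ tail e - r $ head e) / w e" for e
    have pc: "p (tail e) - p (head e) = c e * w e / lam" for e
      unfolding p_def c_def using wne(1)[of e] lam by (simp add: field_simps)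
    let ?OPT = "\<lambda>\<beta>. (\<forall>\<beta>'. ?f \<beta> \<le> ?f \<beta>') \<and> ?y - ?Q *v \<beta> = r"
    have opt1: "?OPT \<beta>1" using o1 r_def by simp
    have opt2: "?OPT \<beta>2" using o2 r_def Qeq by simp
    have KK: "\<bar>c e\<bar> \<le> lam \<and> (\<beta> $ e > 0 \<longrightarrow> c e = lam) \<and> (\<beta> $ e < 0 \<longrightarrow> c e = -lam)"
      if "?OPT \<beta>" for \<beta> e
      using kkt[OF _ lam refl, of ?y ?Q \<beta> e] that Qm_col[OF simple wpos] unfolding c_def by metis
    have lip: "\<forall>e. \<bar>p (tail e) - p (head e)\<bar> \<le> w e"
    proof
      fix e
      have "\<bar>c e\<bar> \<le> lam" using KK[OF opt1] by blast
      then have "\<bar>c e\<bar> * w e \<le> lam * w e" using wne(2)[of e] by (intro mult_right_mono) auto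
      then show "\<bar>p (tail e) - p (head e)\<bar> \<le> w e"
        unfolding pc using lam wne(2)[of e] by (simp add: abs_mult abs_divide field_simps)
    qed
    have lipm: "\<forall>e. \<bar>(\<lambda>v. - p v) (tail e) - (\<lambda>v. - p v) (head e)\<bar> \<le> w e"
      using lip by (simp add: abs_minus_commute)
    have tight: "p (tail e) - p (head e) = w e * sgn (\<beta> $ e / w e)" if "?OPT \<beta>" "\<beta> $ e \<noteq> 0" for \<beta> e
    proof -
      have "sgn (\<beta> $ e / w e) = sgn (\<beta> $ e)" using wne(2)[of e] by (simp add: sgn_divide)
      then show ?thesis using KK[OF that(1), of e] that(2) pc[of e] lam
        by (cases "\<beta> $ e > 0") (auto simp: sgn_if)
    qed
    have cons: "(\<Sum>e\<in>UNIV. Dm tail head a e * (\<beta> $ e / w e)) = ?y $ a - lam * p a" if "?OPT \<beta>" for \<beta> a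
    proof -
      have "(\<Sum>e\<in>UNIV. Dm tail head a e * (\<beta> $ e / w e)) = (?Q *v \<beta>) $ a"
        using Qm_mult[OF simple wpos] by simp
      also have "\<dots> = ?y $ a - r $ a"
      proof -
        have "r $ a = ?y $ a - (?Q *v \<beta>) $ a" using that by auto
        then show ?thesis by simp
      qed
      also have "\<dots> = ?y $ a - lam * p a" unfolding p_def using lam by simp
      finally show ?thesis .
    qed
    define A where "A v \<longleftrightarrow> (\<exists>q. is_path tail head s v q \<and> p s - p v = path_length tail head w q)" for v
    define B where "B v \<longleftrightarrow> (\<exists>q. is_path tail head t v q \<and> (\<lambda>v. - p v) t - (\<lambda>v. - p v) v = path_length tail head w q)" for v
    have CAs: "A a" if "?OPT \<beta>" "Dm tail head a e * (\<beta> $ e / w e) > 0" "p a \<ge> 0" for \<beta> a e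
    proof -
      have "\<forall>a. a \<noteq> s \<longrightarrow> p a \<ge> 0 \<longrightarrow> (\<Sum>e\<in>UNIV. Dm tail head a e * (\<beta> $ e / w e)) \<le> 0"
      proof (intro allI impI)
        fix a assume a: "a \<noteq> s" "p a \<ge> 0"
        have "lam * p a \<ge> 0" using a lam by simp
        moreover have "?y $ a \<le> 0" using a by (simp add: st_vector_def)
        ultimately show "(\<Sum>e\<in>UNIV. Dm tail head a e * (\<beta> $ e / w e)) \<le> 0"
          using cons[OF that(1), of a] by simp
      qed
      moreover have "\<forall>e. \<beta> $ e / w e \<noteq> 0 \<longrightarrow> p (tail e) - p (head e) = w e * sgn (\<beta> $ e / w e)"
        using tight[OF that(1)] by auto
      ultimately show ?thesis using claimA[OF simple wpos lip, of "\<lambda>e. \<beta> $ e / w e" s a] that(2,3)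
        unfolding A_def by blast
    qed
    have CAt: "B a" if "?OPT \<beta>" "Dm tail head a e * (\<beta> $ e / w e) < 0" "p a \<le> 0" for \<beta> a e
    proof -
      have "\<forall>a. a \<noteq> t \<longrightarrow> (\<lambda>v. - p v) a \<ge> 0 \<longrightarrow> (\<Sum>e\<in>UNIV. Dm tail head a e * (\<lambda>e. - (\<beta> $ e / w e)) e) \<le> 0"
      proof (intro allI impI)
        fix a assume a: "a \<noteq> t" "(\<lambda>v. - p v) a \<ge> 0"
        have "lam * p a \<le> 0" using a lam by (simp add: mult_nonneg_nonpos)
        moreover have "?y $ a \<ge> 0" using a by (simp add: st_vector_def)
        ultimately show "(\<Sum>e\<in>UNIV. Dm tail head a e * (\<lambda>e. - (\<beta> $ e / w e)) e) \<le> 0"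
          using cons[OF that(1), of a] by (simp add: sum_negf)
      qed
      moreover have "\<forall>e. (\<lambda>e. - (\<beta> $ e / w e)) e \<noteq> 0 \<longrightarrow>
          (\<lambda>v. - p v) (tail e) - (\<lambda>v. - p v) (head e) = w e * sgn ((\<lambda>e. - (\<beta> $ e / w e)) e)"
      proof (intro allI impI)
        fix e assume "(\<lambda>e. - (\<beta> $ e / w e)) e \<noteq> 0"
        then have "\<beta> $ e \<noteq> 0" by auto
        from tight[OF that(1) this]
        show "(\<lambda>v. - p v) (tail e) - (\<lambda>v. - p v) (head e) = w e * sgn ((\<lambda>e. - (\<beta> $ e / w e)) e)"
          by (simp only: sgn_minus mult_minus_right)
      qed
      moreover have "\<exists>e. 0 < Dm tail head a e * - (\<beta> $ e / w e)" using that(2) by (intro exI[of _ e]) simp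
      moreover have "0 \<le> - p a" using that(3) by simp
      ultimately show ?thesis using claimA[OF simple wpos lipm, of "\<lambda>e. - (\<beta> $ e / w e)" t a]
        unfolding B_def by blast
    qed
    define S where "S = {e. \<beta>1 $ e \<noteq> \<beta>2 $ e}"
    have Sne: "S \<noteq> {}" using neq by (auto simp: S_def vec_eq_iff) (metis)
    have flow: "\<exists>\<beta>. ?OPT \<beta> \<and> \<beta> $ e \<noteq> 0" if "e \<in> S" for e
      using that opt1 opt2 unfolding S_def by (cases "\<beta>1 $ e = 0") auto
    define hi where "hi e = (if p (tail e) > p (head e) then tail e else head e)" for e
    define lo where "lo e = (if p (tail e) > p (head e) then head e else tail e)" for e
    have edge: "{tail e, head e} = {hi e, lo e} \<and> p (hi e) - p (lo e) = w e \<and>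
       (\<exists>\<beta>. ?OPT \<beta> \<and> Dm tail head (hi e) e * (\<beta> $ e / w e) > 0 \<and> Dm tail head (lo e) e * (\<beta> $ e / w e) < 0)"
      if eS: "e \<in> S" for e
    proof -
      obtain \<beta> where b: "?OPT \<beta>" "\<beta> $ e \<noteq> 0" using flow[OF eS] by blast
      have T: "p (tail e) - p (head e) = w e * sgn (\<beta> $ e / w e)" by (rule tight[OF b])
      have sg: "sgn (\<beta> $ e / w e) = sgn (\<beta> $ e)" using wne(2)[of e] by (simp add: sgn_divide)
      show ?thesis
      proof (cases "\<beta> $ e > 0")
        case True
        then have "\<beta> $ e / w e > 0" using wne(2)[of e] by simp
        moreover have "p (tail e) - p (head e) = w e" using T sg True by simp
        ultimately show ?thesis using b True wne(2)[of e] th[of e]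
          by (auto simp: hi_def lo_def Dm_def intro!: exI[of _ \<beta>])
      next
        case False
        then have "\<beta> $ e < 0" using b(2) by simp
        then have "\<beta> $ e / w e < 0" using wne(2)[of e] by (simp add: divide_neg_pos)
        moreover have "p (tail e) - p (head e) = - w e" using T sg \<open>\<beta> $ e < 0\<close> by simp
        ultimately show ?thesis using b wne(2)[of e] th[of e]
          by (auto simp: hi_def lo_def Dm_def insert_commute mult_neg_neg intro!: exI[of _ \<beta>])
      qed
    qed
    have pe: "p (hi e) - p (lo e) = w e" if "e \<in> S" for e using edge[OF that] by blast
    have en: "{tail e, head e} = {hi e, lo e}" if "e \<in> S" for e using edge[OF that] by blast
    have ends: "\<forall>e\<in>S. {tail e, head e} = {hi e, lo e}" using en by blast
    have gap: "\<forall>e\<in>S. p (hi e) > p (lo e)"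
    proof
      fix e assume "e \<in> S" then show "p (hi e) > p (lo e)" using pe[of e] wne(2)[of e] by simp
    qed
    have a: "\<forall>e\<in>S. A (hi e) \<or> B (lo e)"
    proof
      fix e assume e: "e \<in> S"
      obtain \<beta> where b: "?OPT \<beta>" "Dm tail head (hi e) e * (\<beta> $ e / w e) > 0"
          "Dm tail head (lo e) e * (\<beta> $ e / w e) < 0"
        using edge[OF e] by blast
      show "A (hi e) \<or> B (lo e)"
      proof (cases "p (hi e) \<ge> 0")
        case True then show ?thesis using CAs[OF b(1) b(2)] by blast
      next
        case False then have "p (lo e) \<le> 0" using pe[OF e] wne(2)[of e] by linarith
        then show ?thesis using CAt[OF b(1) b(3)] by blast
      qed
    qed
    have b: "\<forall>e\<in>S. A (hi e) \<longrightarrow> A (lo e)"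
    proof (intro ballI impI)
      fix e assume e: "e \<in> S" "A (hi e)"
      then obtain q where q: "is_path tail head s (hi e) q" "p s - p (hi e) = path_length tail head w q"
        unfolding A_def by blast
      from tight_prop[OF simple wpos lip q en[OF e(1)] pe[OF e(1)]] show "A (lo e)" unfolding A_def by blast
    qed
    have c: "\<forall>e\<in>S. \<forall>e'\<in>S. A (hi e) \<longrightarrow> A (hi e') \<longrightarrow> lo e = lo e' \<longrightarrow> hi e = hi e'"
    proof (intro ballI impI)
      fix e e' assume e: "e \<in> S" and e': "e' \<in> S" and Ae: "A (hi e)" and Ae': "A (hi e')" and l: "lo e = lo e'"
      obtain q where q: "is_path tail head s (hi e) q" "p s - p (hi e) = path_length tail head w q"
        using Ae unfolding A_def by blast
      obtain q' where q': "is_path tail head s (hi e') q'" "p s - p (hi e') = path_length tail head w q'"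
        using Ae' unfolding A_def by blast
      have P1: "is_path tail head s (lo e) (q @ [lo e]) \<and> p s - p (lo e) = path_length tail head w (q @ [lo e])"
        using tight_prop[OF simple wpos lip q en[OF e] pe[OF e]] .
      have P2: "is_path tail head s (lo e) (q' @ [lo e]) \<and> p s - p (lo e) = path_length tail head w (q' @ [lo e])"
        using tight_prop[OF simple wpos lip q' en[OF e'] pe[OF e']] l by simp
      have "q @ [lo e] = q' @ [lo e]"
        using tight_unique[OF simple wpos lip _ conjunct1[OF P1] conjunct2[OF P1] conjunct1[OF P2] conjunct2[OF P2]] A1
        by blast
      then have "q = q'" by simp
      then show "hi e = hi e'" using q(1) q'(1) unfolding is_path_def by metis
    qed
    have d: "\<forall>e\<in>S. \<forall>e'\<in>S. B (lo e) \<longrightarrow> B (lo e') \<longrightarrow> hi e = hi e' \<longrightarrow> lo e = lo e'"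
    proof (intro ballI impI)
      fix e e' assume e: "e \<in> S" and e': "e' \<in> S" and Be: "B (lo e)" and Be': "B (lo e')" and h: "hi e = hi e'"
      obtain q where q: "is_path tail head t (lo e) q" "(\<lambda>v. - p v) t - (\<lambda>v. - p v) (lo e) = path_length tail head w q"
        using Be unfolding B_def by blast
      obtain q' where q': "is_path tail head t (lo e') q'" "(\<lambda>v. - p v) t - (\<lambda>v. - p v) (lo e') = path_length tail head w q'"
        using Be' unfolding B_def by blast
      have en1: "{tail e, head e} = {lo e, hi e}" using en[OF e] by (simp add: insert_commute)
      have en2: "{tail e', head e'} = {lo e', hi e'}" using en[OF e'] by (simp add: insert_commute)
      have pe1: "(\<lambda>v. - p v) (lo e) - (\<lambda>v. - p v) (hi e) = w e" using pe[OF e] by simp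
      have pe2: "(\<lambda>v. - p v) (lo e') - (\<lambda>v. - p v) (hi e') = w e'" using pe[OF e'] by simp
      have P1: "is_path tail head t (hi e) (q @ [hi e]) \<and> (\<lambda>v. - p v) t - (\<lambda>v. - p v) (hi e) = path_length tail head w (q @ [hi e])"
        using tight_prop[OF simple wpos lipm q en1 pe1] .
      have P2: "is_path tail head t (hi e) (q' @ [hi e]) \<and> (\<lambda>v. - p v) t - (\<lambda>v. - p v) (hi e) = path_length tail head w (q' @ [hi e])"
        using tight_prop[OF simple wpos lipm q' en2 pe2] h by simp
      have "q @ [hi e] = q' @ [hi e]"
        using tight_unique[OF simple wpos lipm _ conjunct1[OF P1] conjunct2[OF P1] conjunct1[OF P2] conjunct2[OF P2]] A1
        by blast
      then have "q = q'" by simp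
      then show "lo e = lo e'" using q(1) q'(1) unfolding is_path_def by metis
    qed
    have deg: "\<forall>e\<in>S. \<forall>v\<in>{hi e, lo e}. \<exists>e'\<in>S. e' \<noteq> e \<and> v \<in> {hi e', lo e'}"
    proof (intro ballI)
      fix e v assume e: "e \<in> S" and v: "v \<in> {hi e, lo e}"
      show "\<exists>e'\<in>S. e' \<noteq> e \<and> v \<in> {hi e', lo e'}"
      proof (rule ccontr)
        assume no: "\<not> ?thesis"
        have "(\<Sum>e'\<in>UNIV. Dm tail head v e' * (\<beta>1 $ e' / w e')) = (\<Sum>e'\<in>UNIV. Dm tail head v e' * (\<beta>2 $ e' / w e'))"
          using Qm_mult[OF simple wpos, of \<beta>1 v] Qm_mult[OF simple wpos, of \<beta>2 v] Qeq by simp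
        then have circ: "(\<Sum>e'\<in>UNIV. Dm tail head v e' * ((\<beta>1 $ e' - \<beta>2 $ e') / w e')) = 0"
          by (simp add: diff_divide_distrib right_diff_distrib sum_subtractf)
        have "(\<Sum>e'\<in>UNIV. Dm tail head v e' * ((\<beta>1 $ e' - \<beta>2 $ e') / w e'))
            = (\<Sum>e'\<in>UNIV. if e' = e then Dm tail head v e * ((\<beta>1 $ e - \<beta>2 $ e) / w e) else 0)"
        proof (rule sum.cong)
          fix e' :: 'e assume "e' \<in> UNIV"
          show "Dm tail head v e' * ((\<beta>1 $ e' - \<beta>2 $ e') / w e')
              = (if e' = e then Dm tail head v e * ((\<beta>1 $ e - \<beta>2 $ e) / w e) else 0)"
          proof (cases "e' = e")
            case False
            show ?thesis
            proof (cases "e' \<in> S")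
              case True
              then have "v \<notin> {tail e', head e'}" using no False en[OF True] by auto
              then show ?thesis using False by (simp add: Dm_def)
            next
              case False2: False
              then show ?thesis using False by (simp add: S_def)
            qed
          qed simp
        qed simp
        also have "\<dots> = Dm tail head v e * ((\<beta>1 $ e - \<beta>2 $ e) / w e)" by simp
        finally have z: "Dm tail head v e * ((\<beta>1 $ e - \<beta>2 $ e) / w e) = 0" using circ by simp
        have "v \<in> {tail e, head e}" using v en[OF e] by simp
        then have "Dm tail head v e \<noteq> 0" using th[of e] by (auto simp: Dm_def)
        moreover have "(\<beta>1 $ e - \<beta>2 $ e) / w e \<noteq> 0" using e wne(1)[of e] by (simp add: S_def)
        ultimately show False using z by simp
      qed
    qed
    have "S = {}" by (rule comb[OF simple wpos ends gap deg a b c d])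
    then show False using Sne by simp
  qed
  show ?thesis using o1 uniq by blast
qed

end
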